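(* Let $\mathrm{M}=\langle e_1+I,\ e_2+I,\ A\rangle$, where $e_1,e_2$ are the standard basis vectors of $E^2$ and $A=\begin{pmatrix}0&1\\1&0\end{pmatrix}$ is the linear map transposing $e_1$ and $e_2$. Then $$N_A(\mathrm{M})=\{b+B : b_1-b_2\in\mathbb Z \text{ and } B\in\langle -I, A\rangle\},$$ where $b=(b_1,b_2)$.
   Context: Affine maps of $E^2$ are written $b+B$ (meaning $x\mapsto b+Bx$, $b\in E^2$, $B\in\mathrm{GL}(2,\mathbb R)$); $b+I$ is translation by $b$. $N_A(\mathrm{M})$ denotes the normalizer of $\mathrm{M}$ in the group of affine transformations of $E^2$. (Here $\mathrm{M}$ is a 2-space group of type $\ast\times$, i.e. $cm$, and $E^2/\mathrm{M}$ is a Möbius band.) *)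

theory Defs
  imports "HOL-Analysis.Analysis"
begin

definition aff :: "real^2 \<Rightarrow> real^2^2 \<Rightarrow> (real^2 \<Rightarrow> real^2)" where
  "aff b B = (\<lambda>x. b + B *v x)"

definition affine_group :: "(real^2 \<Rightarrow> real^2) set" where
  "affine_group = {aff b B | b B. invertible B}"

inductive_set gen_group :: "('a \<Rightarrow> 'a) set \<Rightarrow> ('a \<Rightarrow> 'a) set" for S where
  gen_id: "id \<in> gen_group S"
| gen_gen: "g \<in> S \<Longrightarrow> g \<in> gen_group S"
| gen_comp: "f \<in> gen_group S \<Longrightarrow> g \<in> gen_group S \<Longrightarrow> f \<circ> g \<in> gen_group S"
| gen_inv: "f \<in> gen_group S \<Longrightarrow> inv f \<in> gen_group S"

definition affine_normalizer :: "(real^2 \<Rightarrow> real^2) set \<Rightarrow> (real^2 \<Rightarrow> real^2) set" where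
  "affine_normalizer M = {f \<in> affine_group. (\<lambda>m. f \<circ> m \<circ> inv f) ` M = M}"

definition swapA :: "real^2^2" where
  "swapA = (\<chi> i j. if i = j then 0 else 1)"

definition I2 :: "real^2^2" where
  "I2 = mat 1"

end

theory Submission imports Defs begin

lemma mat2_eq: "(M::real^2^2) = N \<longleftrightarrow> M$1$1 = N$1$1 \<and> M$1$2 = N$1$2 \<and> M$2$1 = N$2$1 \<and> M$2$2 = N$2$2"
  by (auto simp: vec_eq_iff forall_2)

lemma vec2_eq: "(v::real^2) = w \<longleftrightarrow> v$1 = w$1 \<and> v$2 = w$2"
  by (auto simp: vec_eq_iff forall_2)

lemma mult_entries: "((M::real^2^2) ** N) $ i $ j = M$i$1 * N$1$j + M$i$2 * N$2$j"
  by (simp add: matrix_matrix_mult_def sum_2)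

lemma mv_entries: "((M::real^2^2) *v v) $ i = M$i$1 * v$1 + M$i$2 * v$2"
  by (simp add: matrix_vector_mult_def sum_2)

lemma swapA_entries[simp]: "swapA$1$1 = 0" "swapA$1$2 = 1" "swapA$2$1 = 1" "swapA$2$2 = 0"
  by (simp_all add: swapA_def)

lemma I2_entries[simp]: "I2$1$1 = 1" "I2$1$2 = 0" "I2$2$1 = 0" "I2$2$2 = 1"
  by (simp_all add: I2_def mat_def)

lemma aff_comp: "aff b B \<circ> aff c C = aff (b + B *v c) (B ** C)"
  by (auto simp: aff_def fun_eq_iff matrix_vector_mul_assoc matrix_vector_right_distrib)

lemma aff_id: "aff 0 I2 = id"
  by (auto simp: aff_def I2_def fun_eq_iff)

lemma aff_inj: "aff b B = aff c C \<longleftrightarrow> b = c \<and> B = C"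
proof
  assume h: "aff b B = aff c C"
  then have "aff b B 0 = aff c C 0" by simp
  then have bc: "b = c" by (simp add: aff_def)
  with h have "\<forall>x. B *v x = C *v x" by (auto simp: aff_def fun_eq_iff)
  then have "B = C" by (simp add: matrix_eq)
  with bc show "b = c \<and> B = C" by simp
qed simp

lemma mv_neg: "(M::real^2^2) *v (-v) = -(M *v v)"
  by (simp add: vec2_eq mv_entries)

lemma aff_inv: "B ** Bi = I2 \<Longrightarrow> Bi ** B = I2 \<Longrightarrow> inv (aff b B) = aff (-(Bi *v b)) Bi"
  apply (rule inv_unique_comp)
   apply (simp_all add: aff_comp matrix_vector_mul_assoc aff_id[symmetric] mv_neg)
  apply (simp add: I2_def)
  done

lemma I2_mv[simp]: "I2 *v v = v" by (simp add: I2_def)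
lemma I2_mult[simp]: "I2 ** X = X" "X ** I2 = X" by (simp_all add: I2_def)
lemma swap_swap[simp]: "swapA ** swapA = I2" by (simp add: mat2_eq mult_entries)

definition Mset :: "(real^2 \<Rightarrow> real^2) set" where
  "Mset = {aff v C | v C. v$1 \<in> \<int> \<and> v$2 \<in> \<int> \<and> (C = I2 \<or> C = swapA)}"

lemma Mset_I: "v$1 \<in> \<int> \<Longrightarrow> v$2 \<in> \<int> \<Longrightarrow> C = I2 \<or> C = swapA \<Longrightarrow> aff v C \<in> Mset"
  unfolding Mset_def by blast

abbreviation "GM \<equiv> gen_group {aff (axis 1 1) I2, aff (axis 2 1) I2, aff 0 swapA}"

lemma GM_sub: "g \<in> GM \<Longrightarrow> g \<in> Mset"
proof (induction rule: gen_group.induct)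
  case gen_id
  have "aff 0 I2 \<in> Mset" unfolding Mset_def by (rule CollectI, rule exI[of _ 0], rule exI[of _ I2]) simp
  then show ?case by (metis aff_id)
next
  case (gen_gen g)
  then show ?case by (auto intro!: Mset_I simp: axis_def)
next
  case (gen_comp f g)
  then obtain v C w D where f: "f = aff v C" "v$1 \<in> \<int>" "v$2 \<in> \<int>" "C = I2 \<or> C = swapA"
    and g: "g = aff w D" "w$1 \<in> \<int>" "w$2 \<in> \<int>" "D = I2 \<or> D = swapA"
    unfolding Mset_def by blast
  have "f \<circ> g = aff (v + C *v w) (C ** D)" using f g by (simp add: aff_comp)
  moreover have "(v + C *v w)$1 \<in> \<int> \<and> (v + C *v w)$2 \<in> \<int>"
    using f(2,3,4) g(2,3) by (elim disjE) (simp_all add: mv_entries)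
  moreover have "C ** D = I2 \<or> C ** D = swapA" using f(4) g(4) by (elim disjE) simp_all
  ultimately show ?case unfolding Mset_def by blast
next
  case (gen_inv f)
  then obtain v C where f: "f = aff v C" "v$1 \<in> \<int>" "v$2 \<in> \<int>" "C = I2 \<or> C = swapA"
    unfolding Mset_def by blast
  have "C ** C = I2" using f(4) by (elim disjE) simp_all
  then have "inv f = aff (-(C *v v)) C" using f by (simp add: aff_inv)
  moreover have "(-(C *v v))$1 \<in> \<int> \<and> (-(C *v v))$2 \<in> \<int>"
    using f(2,3,4) by (elim disjE) (simp_all add: mv_entries)
  ultimately show ?case using f unfolding Mset_def by blast
qed

lemma trans_nat: "aff (of_nat n *\<^sub>R a) I2 \<in> gen_group S" if "aff a I2 \<in> gen_group S"
proof (induction n)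
  case 0
  have "aff (of_nat 0 *\<^sub>R a) I2 = id" by (simp add: aff_id)
  then show ?case using gen_group.gen_id by metis
next
  case (Suc n)
  have "aff (of_nat (Suc n) *\<^sub>R a) I2 = aff (of_nat n *\<^sub>R a) I2 \<circ> aff a I2"
    by (simp add: aff_comp aff_inj scaleR_add_left)
  then show ?case using Suc that gen_group.gen_comp by metis
qed

lemma trans_int: "aff (of_int n *\<^sub>R a) I2 \<in> gen_group S" if "aff a I2 \<in> gen_group S"
proof (cases "n \<ge> 0")
  case True
  then have "aff (of_int n *\<^sub>R a) I2 = aff (of_nat (nat n) *\<^sub>R a) I2" by simp
  then show ?thesis using trans_nat[OF that, of "nat n"] by metis
next
  case False
  have "inv (aff (of_nat (nat (-n)) *\<^sub>R a) I2) = aff (-(of_nat (nat (-n)) *\<^sub>R a)) I2"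
    using aff_inv[of I2 I2 "of_nat (nat (-n)) *\<^sub>R a"] by simp
  also have "-(of_nat (nat (-n)) *\<^sub>R a) = of_int n *\<^sub>R a" using False by simp
  finally show ?thesis using trans_nat[OF that, of "nat (-n)"] gen_group.gen_inv by metis
qed

lemma Mset_sub: "g \<in> Mset \<Longrightarrow> g \<in> GM"
proof -
  assume "g \<in> Mset"
  then obtain v C where g: "g = aff v C" "v$1 \<in> \<int>" "v$2 \<in> \<int>" "C = I2 \<or> C = swapA"
    unfolding Mset_def by blast
  obtain i j where ij: "v$1 = of_int i" "v$2 = of_int j" using g by (metis Ints_cases)
  have t1: "aff (of_int i *\<^sub>R axis 1 1) I2 \<in> GM"
    by (rule trans_int) (simp add: gen_group.gen_gen)
  have t2: "aff (of_int j *\<^sub>R axis 2 1) I2 \<in> GM"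
    by (rule trans_int) (simp add: gen_group.gen_gen)
  have "aff v I2 = aff (of_int i *\<^sub>R axis 1 1) I2 \<circ> aff (of_int j *\<^sub>R axis 2 1) I2"
    by (simp add: aff_comp aff_inj vec2_eq ij axis_def)
  then have tv: "aff v I2 \<in> GM" using t1 t2 gen_group.gen_comp by metis
  show ?thesis
  proof (cases "C = I2")
    case True then show ?thesis using g tv by simp
  next
    case False
    then have "g = aff v I2 \<circ> aff 0 swapA" using g by (simp add: aff_comp)
    moreover have "aff 0 swapA \<in> GM" by (rule gen_group.gen_gen) simp
    ultimately show ?thesis using tv gen_group.gen_comp by metis
  qed
qed

lemma GM_eq: "GM = Mset" using GM_sub Mset_sub by blast

lemma norm_iff:
  assumes fi: "f \<circ> g = id" "g \<circ> f = id" and g: "g = inv f"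
  shows "(\<lambda>m. f \<circ> m \<circ> inv f) ` M = M \<longleftrightarrow>
         (\<forall>m\<in>M. f \<circ> m \<circ> g \<in> M) \<and> (\<forall>m\<in>M. g \<circ> m \<circ> f \<in> M)"
proof
  assume h: "(\<lambda>m. f \<circ> m \<circ> inv f) ` M = M"
  show "(\<forall>m\<in>M. f \<circ> m \<circ> g \<in> M) \<and> (\<forall>m\<in>M. g \<circ> m \<circ> f \<in> M)"
  proof safe
    fix m assume "m \<in> M" then show "f \<circ> m \<circ> g \<in> M" using h g by blast
  next
    fix m assume "m \<in> M"
    then obtain m' where m': "m' \<in> M" "m = f \<circ> m' \<circ> g" using h g by blast
    have "g \<circ> m \<circ> f = (g \<circ> f) \<circ> m' \<circ> (g \<circ> f)" using m' by (simp add: comp_assoc)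
    then show "g \<circ> m \<circ> f \<in> M" using m' fi by simp
  qed
next
  assume h: "(\<forall>m\<in>M. f \<circ> m \<circ> g \<in> M) \<and> (\<forall>m\<in>M. g \<circ> m \<circ> f \<in> M)"
  show "(\<lambda>m. f \<circ> m \<circ> inv f) ` M = M"
  proof
    show "(\<lambda>m. f \<circ> m \<circ> inv f) ` M \<subseteq> M" using h g by blast
  next
    show "M \<subseteq> (\<lambda>m. f \<circ> m \<circ> inv f) ` M"
    proof
      fix m assume m: "m \<in> M"
      have "m = (f \<circ> g) \<circ> m \<circ> (f \<circ> g)" using fi by simp
      also have "\<dots> = f \<circ> (g \<circ> m \<circ> f) \<circ> g" by (simp add: comp_assoc)
      finally show "m \<in> (\<lambda>m. f \<circ> m \<circ> inv f) ` M" using h m g by blast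
    qed
  qed
qed

lemma aff_bij:
  assumes "B ** Bi = I2" "Bi ** B = I2"
  shows "aff b B \<circ> aff (-(Bi *v b)) Bi = id" "aff (-(Bi *v b)) Bi \<circ> aff b B = id"
  using assms by (simp_all add: aff_comp matrix_vector_mul_assoc aff_id[symmetric] mv_neg aff_inj)

lemma conj_formula:
  assumes "B ** Bi = I2" "Bi ** B = I2"
  shows "aff b B \<circ> aff v C \<circ> aff (-(Bi *v b)) Bi = aff (b + B *v v - (B ** C ** Bi) *v b) (B ** C ** Bi)"
  by (simp add: aff_comp aff_inj mv_neg matrix_vector_mul_assoc matrix_vector_right_distrib matrix_mul_assoc)

lemma keyL:
  assumes inv: "B ** Bi = I2" "Bi ** B = I2"
    and h: "\<forall>m\<in>Mset. aff b B \<circ> m \<circ> aff (-(Bi *v b)) Bi \<in> Mset"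
  shows "B$1$1 \<in> \<int> \<and> B$1$2 \<in> \<int> \<and> B$2$1 \<in> \<int> \<and> B$2$2 \<in> \<int> \<and>
         B ** swapA = swapA ** B \<and> b$1 - b$2 \<in> \<int>"
proof -
  have m1: "aff (axis 1 1) I2 \<in> Mset" by (auto intro!: Mset_I simp: axis_def)
  have m2: "aff (axis 2 1) I2 \<in> Mset" by (auto intro!: Mset_I simp: axis_def)
  have m3: "aff 0 swapA \<in> Mset" by (auto intro!: Mset_I)
  have "aff b B \<circ> aff (axis 1 1) I2 \<circ> aff (-(Bi *v b)) Bi = aff (B *v axis 1 1) I2"
    using conj_formula[OF inv, of b "axis 1 1" I2] inv by simp
  then have "aff (B *v axis 1 1) I2 \<in> Mset"
    using h m1 by metis
  then have c1: "B$1$1 \<in> \<int> \<and> B$2$1 \<in> \<int>"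
    unfolding Mset_def by (auto simp: aff_inj mv_entries axis_def)
  have "aff b B \<circ> aff (axis 2 1) I2 \<circ> aff (-(Bi *v b)) Bi = aff (B *v axis 2 1) I2"
    using conj_formula[OF inv, of b "axis 2 1" I2] inv by simp
  then have "aff (B *v axis 2 1) I2 \<in> Mset"
    using h m2 by metis
  then have c2: "B$1$2 \<in> \<int> \<and> B$2$2 \<in> \<int>"
    unfolding Mset_def by (auto simp: aff_inj mv_entries axis_def)
  define D where "D = B ** swapA ** Bi"
  have "aff b B \<circ> aff 0 swapA \<circ> aff (-(Bi *v b)) Bi = aff (b - D *v b) D"
    using conj_formula[OF inv, of b 0 swapA] unfolding D_def by simp
  then have "aff (b - D *v b) D \<in> Mset"
    using h m3 by metis
  then have D: "(b - D *v b)$1 \<in> \<int>" "D = I2 \<or> D = swapA"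
    unfolding Mset_def by (auto simp: aff_inj)
  have "Bi ** D ** B = (Bi ** B) ** swapA ** (Bi ** B)" unfolding D_def by (simp only: matrix_mul_assoc)
  also have "\<dots> = swapA" using inv by simp
  finally have "Bi ** D ** B = swapA" .
  moreover have "swapA \<noteq> I2" by (simp add: mat2_eq)
  ultimately have DA: "D = swapA" using D(2) inv by auto
  have "D ** B = (B ** swapA) ** (Bi ** B)" unfolding D_def by (simp only: matrix_mul_assoc)
  then have "B ** swapA = swapA ** B" using inv DA by simp
  moreover have "b$1 - b$2 \<in> \<int>" using D(1) DA by (simp add: mv_entries)
  ultimately show ?thesis using c1 c2 by blast
qed

lemma int_alg:
  fixes p q p' q' :: int
  assumes "p*p' + q*q' = 1" "p*q' + q*p' = 0"
  shows "(p=1\<and>q=0) \<or> (p=-1\<and>q=0) \<or> (p=0\<and>q=1) \<or> (p=0\<and>q=-1)"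
proof -
  have "(p+q)*(p'+q') = 1" using assms by (simp add: algebra_simps)
  then have a: "p+q = 1 \<or> p+q = -1" by (auto simp: zmult_eq_1_iff)
  have "(p-q)*(p'-q') = 1" using assms by (simp add: algebra_simps)
  then have b: "p-q = 1 \<or> p-q = -1" by (auto simp: zmult_eq_1_iff)
  from a b show ?thesis by arith
qed

definition four :: "(real^2^2) set" where "four = {I2, -I2, swapA, -swapA}"

lemma four_alg:
  assumes "B$1$1 \<in> \<int> \<and> B$1$2 \<in> \<int> \<and> B$2$1 \<in> \<int> \<and> B$2$2 \<in> \<int> \<and> B ** swapA = swapA ** B"
    and "Bi$1$1 \<in> \<int> \<and> Bi$1$2 \<in> \<int> \<and> Bi$2$1 \<in> \<int> \<and> Bi$2$2 \<in> \<int> \<and> Bi ** swapA = swapA ** Bi"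
    and "B ** Bi = I2"
  shows "B \<in> four"
proof -
  have hB: "B ** swapA = swapA ** B" using assms(1) by blast
  then have "(B ** swapA)$1$1 = (swapA ** B)$1$1" "(B ** swapA)$1$2 = (swapA ** B)$1$2" by simp_all
  then have cB: "B$2$2 = B$1$1" "B$2$1 = B$1$2" by (simp_all add: mult_entries)
  have hBi: "Bi ** swapA = swapA ** Bi" using assms(2) by blast
  then have "(Bi ** swapA)$1$1 = (swapA ** Bi)$1$1" "(Bi ** swapA)$1$2 = (swapA ** Bi)$1$2" by simp_all
  then have cBi: "Bi$2$2 = Bi$1$1" "Bi$2$1 = Bi$1$2" by (simp_all add: mult_entries)
  obtain p where p: "B$1$1 = of_int p" using assms(1) Ints_cases by blast
  obtain q where q: "B$1$2 = of_int q" using assms(1) Ints_cases by blast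
  obtain p' where p': "Bi$1$1 = of_int p'" using assms(2) Ints_cases by blast
  obtain q' where q': "Bi$1$2 = of_int q'" using assms(2) Ints_cases by blast
  note pq = p q p' q'
  have e1: "B$1$1 * Bi$1$1 + B$1$2 * Bi$2$1 = 1" using assms(3) by (simp add: mat2_eq mult_entries)
  have e2: "B$1$1 * Bi$1$2 + B$1$2 * Bi$2$2 = 0" using assms(3) by (simp add: mat2_eq mult_entries)
  have "real_of_int (p*p' + q*q') = 1" using e1 cBi pq by simp
  then have i1: "p*p' + q*q' = 1" by linarith
  have "real_of_int (p*q' + q*p') = 0" using e2 cBi pq by simp
  then have i2: "p*q' + q*p' = 0" by linarith
  from int_alg[OF i1 i2] have
    "(B$1$1 = 1 \<and> B$1$2 = 0) \<or> (B$1$1 = -1 \<and> B$1$2 = 0) \<or> (B$1$1 = 0 \<and> B$1$2 = 1) \<or> (B$1$1 = 0 \<and> B$1$2 = -1)"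
    using pq(1,2) by (elim disjE) simp_all
  then show ?thesis unfolding four_def insert_iff empty_iff mat2_eq using cB
    by (elim disjE) simp_all
qed

abbreviation "G2 \<equiv> gen_group {aff 0 (- I2), aff 0 swapA}"

lemma four_prod: "B \<in> four \<Longrightarrow> C \<in> four \<Longrightarrow> B ** C \<in> four"
  unfolding four_def insert_iff empty_iff
  by (elim disjE FalseE; simp add: mat2_eq mult_entries)

lemma four_sq: "B \<in> four \<Longrightarrow> B ** B = I2"
  unfolding four_def insert_iff empty_iff
  by (elim disjE FalseE; simp add: mat2_eq mult_entries)

lemma four_comm: "B \<in> four \<Longrightarrow> B ** swapA = swapA ** B"
  unfolding four_def insert_iff empty_iff
  by (elim disjE FalseE; simp add: mat2_eq mult_entries)

lemma G2_sub: "g \<in> G2 \<Longrightarrow> \<exists>B\<in>four. g = aff 0 B"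
proof (induction rule: gen_group.induct)
  case gen_id then show ?case using aff_id unfolding four_def by auto
next
  case (gen_gen g) then show ?case unfolding four_def by auto
next
  case (gen_comp f g)
  then obtain B C where "B \<in> four" "C \<in> four" "f = aff 0 B" "g = aff 0 C" by blast
  moreover then have "f \<circ> g = aff 0 (B ** C)" by (simp add: aff_comp)
  ultimately show ?case using four_prod by blast
next
  case (gen_inv f)
  then obtain B where B: "B \<in> four" "f = aff 0 B" by blast
  then have "inv f = aff 0 B" using four_sq[OF B(1)] aff_inv[of B B 0] by simp
  then show ?case using B by blast
qed

lemma four_G2: "B \<in> four \<Longrightarrow> aff 0 B \<in> G2"
proof -
  assume "B \<in> four"
  moreover have "aff 0 I2 \<in> G2" using aff_id gen_group.gen_id by metis
  moreover have "aff 0 (-I2) \<in> G2" by (rule gen_group.gen_gen) simp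
  moreover have "aff 0 swapA \<in> G2" by (rule gen_group.gen_gen) simp
  moreover have "aff 0 (-swapA) = aff 0 (-I2) \<circ> aff 0 swapA"
    by (simp add: aff_comp aff_inj mat2_eq mult_entries)
  ultimately have h4: "aff 0 (-swapA) \<in> G2" using gen_group.gen_comp by metis
  have "B = I2 \<or> B = -I2 \<or> B = swapA \<or> B = -swapA" using \<open>B \<in> four\<close> unfolding four_def by simp
  then show ?thesis using h4 \<open>aff 0 I2 \<in> G2\<close> \<open>aff 0 (-I2) \<in> G2\<close> \<open>aff 0 swapA \<in> G2\<close>
    by (elim disjE) simp_all
qed

lemma conj_ok:
  assumes B: "B \<in> four" and b: "b$1 - b$2 \<in> \<int>" and m: "m \<in> Mset"
  shows "aff b B \<circ> m \<circ> aff (-(B *v b)) B \<in> Mset"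
proof -
  obtain v C where mv: "m = aff v C" "v$1 \<in> \<int>" "v$2 \<in> \<int>" "C = I2 \<or> C = swapA"
    using m unfolding Mset_def by blast
  have sq: "B ** B = I2" using four_sq[OF B] .
  have cm: "B ** C ** B = C" using mv(4)
  proof
    assume "C = I2" then show ?thesis using sq by simp
  next
    assume "C = swapA" then show ?thesis using four_comm[OF B] sq
      by (metis matrix_mul_assoc I2_mult(1))
  qed
  have eq: "aff b B \<circ> m \<circ> aff (-(B *v b)) B = aff (b + B *v v - C *v b) C"
    using conj_formula[OF sq sq, of b v C] cm mv(1) by simp
  have "(b + B *v v - C *v b)$1 \<in> \<int> \<and> (b + B *v v - C *v b)$2 \<in> \<int>"
  proof -
    have bv: "(B *v v)$1 \<in> \<int> \<and> (B *v v)$2 \<in> \<int>"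
      using B mv(2,3) unfolding four_def by (auto simp: mv_entries)
    have "(b - C *v b)$1 \<in> \<int> \<and> (b - C *v b)$2 \<in> \<int>"
    proof (cases "C = I2")
      case True then show ?thesis by simp
    next
      case False
      then have "C = swapA" using mv(4) by simp
      moreover have "b$2 - b$1 \<in> \<int>" using b by (metis Ints_minus minus_diff_eq)
      ultimately show ?thesis using b by (simp add: mv_entries)
    qed
    then have "(B *v v)$1 + (b$1 - (C *v b)$1) \<in> \<int> \<and> (B *v v)$2 + (b$2 - (C *v b)$2) \<in> \<int>"
      using bv by (simp add: Ints_add)
    moreover have "(b + B *v v - C *v b)$1 = (B *v v)$1 + (b$1 - (C *v b)$1)"
      "(b + B *v v - C *v b)$2 = (B *v v)$2 + (b$2 - (C *v b)$2)" by simp_all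
    ultimately show ?thesis by metis
  qed
  then show ?thesis unfolding eq Mset_def using mv(4) by blast
qed

lemma neg_neg_mv: "(B::real^2^2) ** Bi = I2 \<Longrightarrow> -(B *v (-(Bi *v b))) = b"
  by (simp add: mv_neg matrix_vector_mul_assoc)

lemma four_diff: "B \<in> four \<Longrightarrow> (b::real^2)$1 - b$2 \<in> \<int> \<Longrightarrow> (-(B *v b))$1 - (-(B *v b))$2 \<in> \<int>"
proof -
  assume B: "B \<in> four" and b: "b$1 - b$2 \<in> \<int>"
  have b': "b$2 - b$1 \<in> \<int>" using b by (metis Ints_minus minus_diff_eq)
  have "B = I2 \<or> B = -I2 \<or> B = swapA \<or> B = -swapA" using B unfolding four_def by simp
  then show ?thesis using b b' by (elim disjE) (simp_all add: mv_entries)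
qed

theorem lemma13:
  shows "affine_normalizer
           (gen_group {aff (axis 1 1) I2, aff (axis 2 1) I2, aff 0 swapA})
         = {aff b B | b B. b $ 1 - b $ 2 \<in> \<int> \<and>
              aff 0 B \<in> gen_group {aff 0 (- I2), aff 0 swapA}}"
proof
  show "affine_normalizer GM \<subseteq> {aff b B | b B. b $ 1 - b $ 2 \<in> \<int> \<and> aff 0 B \<in> G2}"
  proof
    fix f assume f: "f \<in> affine_normalizer GM"
    then obtain b B where fb: "f = aff b B" "invertible B"
      unfolding affine_normalizer_def affine_group_def by blast
    then obtain Bi where Bi: "B ** Bi = I2" "Bi ** B = I2" unfolding invertible_def I2_def by blast
    define c where "c = -(Bi *v b)"
    have ginv: "inv f = aff c Bi" unfolding c_def fb using aff_inv[OF Bi] .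
    have fg: "f \<circ> aff c Bi = id" "aff c Bi \<circ> f = id" unfolding c_def fb using aff_bij[OF Bi] by simp_all
    have img: "(\<lambda>m. f \<circ> m \<circ> inv f) ` Mset = Mset" using f GM_eq unfolding affine_normalizer_def by simp
    have both: "(\<forall>m\<in>Mset. f \<circ> m \<circ> aff c Bi \<in> Mset) \<and> (\<forall>m\<in>Mset. aff c Bi \<circ> m \<circ> f \<in> Mset)"
      by (rule iffD1[OF norm_iff[OF fg ginv[symmetric]] img])
    have r1: "B$1$1 \<in> \<int> \<and> B$1$2 \<in> \<int> \<and> B$2$1 \<in> \<int> \<and> B$2$2 \<in> \<int> \<and>
         B ** swapA = swapA ** B \<and> b$1 - b$2 \<in> \<int>"
      by (rule keyL[OF Bi]) (use both in \<open>simp add: fb c_def\<close>)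
    have fc: "aff (-(B *v c)) B = f" unfolding c_def fb using neg_neg_mv[OF Bi(1)] by simp
    have r2: "Bi$1$1 \<in> \<int> \<and> Bi$1$2 \<in> \<int> \<and> Bi$2$1 \<in> \<int> \<and> Bi$2$2 \<in> \<int> \<and>
         Bi ** swapA = swapA ** Bi \<and> c$1 - c$2 \<in> \<int>"
      by (rule keyL[OF Bi(2) Bi(1)]) (use both in \<open>simp add: fc\<close>)
    have "B \<in> four" using four_alg[OF _ _ Bi(1)] r1 r2 by blast
    then have "aff 0 B \<in> G2" by (rule four_G2)
    then show "f \<in> {aff b B | b B. b $ 1 - b $ 2 \<in> \<int> \<and> aff 0 B \<in> G2}"
      using fb r1 by blast
  qed
next
  show "{aff b B | b B. b $ 1 - b $ 2 \<in> \<int> \<and> aff 0 B \<in> G2} \<subseteq> affine_normalizer GM"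
  proof
    fix f assume "f \<in> {aff b B | b B. b $ 1 - b $ 2 \<in> \<int> \<and> aff 0 B \<in> G2}"
    then obtain b B where fb: "f = aff b B" "b$1 - b$2 \<in> \<int>" "aff 0 B \<in> G2" by blast
    obtain B' where "B' \<in> four" "aff 0 B = aff 0 B'" using G2_sub[OF fb(3)] by blast
    then have B: "B \<in> four" by (simp add: aff_inj)
    have sq: "B ** B = I2" using four_sq[OF B] .
    have invB: "invertible B" unfolding invertible_def using sq by (auto simp: I2_def)
    define c where "c = -(B *v b)"
    have ginv: "inv f = aff c B" unfolding c_def fb using aff_inv[OF sq sq] .
    have fg: "f \<circ> aff c B = id" "aff c B \<circ> f = id" unfolding c_def fb using aff_bij[OF sq sq] by simp_all
    have fc: "aff (-(B *v c)) B = f" unfolding c_def fb using neg_neg_mv[OF sq] by simp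
    have c: "c$1 - c$2 \<in> \<int>" unfolding c_def using four_diff[OF B fb(2)] .
    have h1: "\<forall>m\<in>Mset. f \<circ> m \<circ> aff c B \<in> Mset"
      using conj_ok[OF B fb(2)] unfolding fb c_def by blast
    have h2: "\<forall>m\<in>Mset. aff c B \<circ> m \<circ> f \<in> Mset"
      using conj_ok[OF B c] fc by simp
    have im: "(\<lambda>m. f \<circ> m \<circ> inv f) ` Mset = Mset"
      by (rule iffD2[OF norm_iff[OF fg ginv[symmetric]]]) (intro conjI h1 h2)
    have ag: "f \<in> affine_group" unfolding affine_group_def using fb(1) invB by blast
    show "f \<in> affine_normalizer GM" unfolding affine_normalizer_def GM_eq using im ag by simp
  qed
qed

end
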